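(* Let $\mathcal{H},\mathcal{K}$ be complex Hilbert spaces, let $\Phi:\mathcal{B}(\mathcal{H})\to\mathcal{B}(\mathcal{K})$ be a unital positive linear map, and let $A,B\in\mathcal{B}(\mathcal{H})$ with $A$ positive invertible and $mA\le B\le MA$ for some scalars $0<m<M$. Then $$\Phi(BA^{-1}B)\le\left(\frac{M+m}{2\sqrt{Mm}}\right)^2\Phi(B)\Phi(A)^{-1}\Phi(B).$$
   Context: $\le$ is the Löwner order. A linear map is positive if it maps positive operators to positive operators, and unital if it maps $I$ to $I$. *)

theory Defs
  imports "HOL-Analysis.Analysis" "HOL-Library.Complex_Order"
begin

class complex_vector = real_vector +
  fixes scaleC :: "complex \<Rightarrow> 'a \<Rightarrow> 'a"
  assumes scaleC_add_right: "scaleC a (x + y) = scaleC a x + scaleC a y"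
    and scaleC_add_left: "scaleC (a + b) x = scaleC a x + scaleC b x"
    and scaleC_scaleC: "scaleC a (scaleC b x) = scaleC (a * b) x"
    and scaleC_one: "scaleC 1 x = x"
    and scaleR_scaleC: "scaleR r x = scaleC (complex_of_real r) x"

text \<open>Complex inner product spaces (inner product linear in the second argument),
  whose norm is the one induced by the inner product.\<close>
class complex_inner = complex_vector + real_normed_vector +
  fixes cinner :: "'a \<Rightarrow> 'a \<Rightarrow> complex"
  assumes cinner_cnj_commute: "cinner x y = cnj (cinner y x)"
    and cinner_add_right: "cinner x (y + z) = cinner x y + cinner x z"
    and cinner_scaleC_right: "cinner x (scaleC c y) = c * cinner x y"
    and cinner_ge_zero: "0 \<le> cinner x x"
    and cinner_eq_zero_iff: "cinner x x = 0 \<longleftrightarrow> x = 0"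
    and norm_eq_sqrt_cinner: "norm x = sqrt (Re (cinner x x))"

class chilbert_space = complex_inner + complete_space

definition bop :: "('a::chilbert_space \<Rightarrow> 'a) \<Rightarrow> bool" where
  "bop T \<longleftrightarrow> bounded_linear T \<and> (\<forall>c x. T (scaleC c x) = scaleC c (T x))"

definition positive_op :: "('a::chilbert_space \<Rightarrow> 'a) \<Rightarrow> bool" where
  "positive_op T \<longleftrightarrow> bop T \<and> (\<forall>x. 0 \<le> cinner x (T x))"

definition loewner_le :: "('a::chilbert_space \<Rightarrow> 'a) \<Rightarrow> ('a \<Rightarrow> 'a) \<Rightarrow> bool" where
  "loewner_le S T \<longleftrightarrow> positive_op (\<lambda>x. T x - S x)"

definition invertible_op :: "('a::chilbert_space \<Rightarrow> 'a) \<Rightarrow> bool" where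
  "invertible_op T \<longleftrightarrow> bop T \<and> (\<exists>S. bop S \<and> T \<circ> S = id \<and> S \<circ> T = id)"

definition unital_positive_linear_map ::
    "(('a::chilbert_space \<Rightarrow> 'a) \<Rightarrow> ('b::chilbert_space \<Rightarrow> 'b)) \<Rightarrow> bool" where
  "unital_positive_linear_map \<Phi> \<longleftrightarrow>
     (\<forall>T. bop T \<longrightarrow> bop (\<Phi> T)) \<and>
     (\<forall>S T. bop S \<longrightarrow> bop T \<longrightarrow> \<Phi> (\<lambda>x. S x + T x) = (\<lambda>y. \<Phi> S y + \<Phi> T y)) \<and>
     (\<forall>c T. bop T \<longrightarrow> \<Phi> (\<lambda>x. scaleC c (T x)) = (\<lambda>y. scaleC c (\<Phi> T y))) \<and>
     (\<forall>T. positive_op T \<longrightarrow> positive_op (\<Phi> T)) \<and>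
     \<Phi> id = id"

end

theory Submission
  imports Defs
begin

lemma less_eq_complex_iff: "(x::complex) \<le> y \<longleftrightarrow> Re x \<le> Re y \<and> Im x = Im y"
  by (simp add: less_eq_complex_def)


lemma scaleC_zero_right: "scaleC c (0::'a::complex_inner) = 0"
proof -
  have "scaleC c 0 = scaleC c (0 + 0)" by simp
  also have "\<dots> = scaleC c 0 + scaleC c 0" by (rule scaleC_add_right)
  finally show ?thesis by simp
qed

lemma scaleC_minus_right: "scaleC c (- (x::'a::complex_inner)) = - scaleC c x"
proof -
  have "scaleC c x + scaleC c (- x) = scaleC c (x + - x)" by (rule scaleC_add_right[symmetric])
  also have "\<dots> = 0" by (simp add: scaleC_zero_right)
  finally show ?thesis by (rule minus_unique[symmetric])
qed

lemma scaleC_diff_right: "scaleC c ((x::'a::complex_inner) - y) = scaleC c x - scaleC c y"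
  using scaleC_add_right[of c x "-y"] by (simp add: scaleC_minus_right)

lemma scaleC_of_real: "scaleC (complex_of_real r) (x::'a::complex_inner) = scaleR r x"
  by (simp add: scaleR_scaleC)

lemma cinner_add_left: "(cinner::'a::complex_inner\<Rightarrow>'a\<Rightarrow>complex) (x + y) z = cinner x z + cinner y z"
  by (metis cinner_cnj_commute cinner_add_right complex_cnj_add)

lemma cinner_scaleC_left: "(cinner::'a::complex_inner\<Rightarrow>'a\<Rightarrow>complex) (scaleC c x) y = cnj c * cinner x y"
  by (metis cinner_cnj_commute cinner_scaleC_right complex_cnj_mult)

lemma cinner_zero_right[simp]: "(cinner::'a::complex_inner\<Rightarrow>'a\<Rightarrow>complex) x 0 = 0"
  using cinner_add_right[of x 0 0] by simp

lemma cinner_zero_left[simp]: "(cinner::'a::complex_inner\<Rightarrow>'a\<Rightarrow>complex) 0 x = 0"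
  using cinner_add_left[of 0 0 x] by simp

lemma cinner_minus_right: "(cinner::'a::complex_inner\<Rightarrow>'a\<Rightarrow>complex) x (- y) = - cinner x y"
proof -
  have "cinner x y + cinner x (-y) = 0" using cinner_add_right[of x y "-y"] by simp
  then show ?thesis by (rule minus_unique[symmetric])
qed

lemma cinner_minus_left: "(cinner::'a::complex_inner\<Rightarrow>'a\<Rightarrow>complex) (- x) y = - cinner x y"
proof -
  have "cinner x y + cinner (-x) y = 0" using cinner_add_left[of x "-x" y] by simp
  then show ?thesis by (rule minus_unique[symmetric])
qed

lemma cinner_diff_right: "(cinner::'a::complex_inner\<Rightarrow>'a\<Rightarrow>complex) x (y - z) = cinner x y - cinner x z"
  using cinner_add_right[of x y "-z"] by (simp add: cinner_minus_right)

lemma cinner_diff_left: "(cinner::'a::complex_inner\<Rightarrow>'a\<Rightarrow>complex) (x - y) z = cinner x z - cinner y z"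
  using cinner_add_left[of x "-y" z] by (simp add: cinner_minus_left)

lemma cinner_scaleR_right: "(cinner::'a::complex_inner\<Rightarrow>'a\<Rightarrow>complex) x (scaleR r y) = of_real r * cinner x y"
  by (simp add: scaleR_scaleC cinner_scaleC_right)

lemma cinner_scaleR_left: "(cinner::'a::complex_inner\<Rightarrow>'a\<Rightarrow>complex) (scaleR r x) y = of_real r * cinner x y"
  by (simp add: scaleR_scaleC cinner_scaleC_left)

lemma cinner_self_Im: "Im (cinner (x::'a::complex_inner) x) = 0"
  using cinner_ge_zero[of x] by (simp add: less_eq_complex_def)

lemma cinner_self_norm: "(cinner::'a::complex_inner\<Rightarrow>'a\<Rightarrow>complex) x x = complex_of_real ((norm x)\<^sup>2)"
proof -
  have "Re (cinner x x) \<ge> 0" using cinner_ge_zero[of x] by (simp add: less_eq_complex_def)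
  then show ?thesis using cinner_self_Im[of x] norm_eq_sqrt_cinner[of x]
    by (simp add: complex_eq_iff)
qed


lemma bop_add: "bop T \<Longrightarrow> T (x + y) = T x + T y"
  unfolding bop_def using linear_add bounded_linear.linear by blast
lemma bop_diff: "bop T \<Longrightarrow> T (x - y) = T x - T y"
  unfolding bop_def using linear_diff bounded_linear.linear by blast
lemma bop_scaleR: "bop T \<Longrightarrow> T (scaleR r x) = scaleR r (T x)"
  unfolding bop_def using linear_scale bounded_linear.linear by blast
lemma bop_scaleC: "bop T \<Longrightarrow> T (scaleC c x) = scaleC c (T x)"
  unfolding bop_def by blast
lemma bop_zero: "bop T \<Longrightarrow> T 0 = 0"
  unfolding bop_def using linear_0 bounded_linear.linear by blast

lemma bop_id: "bop (id::'a::chilbert_space \<Rightarrow> 'a)"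
  unfolding bop_def id_def by (simp add: bounded_linear_ident)
lemma bop_id': "bop (\<lambda>x::'a::chilbert_space. x)"
  unfolding bop_def by (simp add: bounded_linear_ident)

lemma bop_plus: "bop S \<Longrightarrow> bop T \<Longrightarrow> bop (\<lambda>x. S x + T x)"
  unfolding bop_def by (auto intro: bounded_linear_add simp: scaleC_add_right)
lemma bop_minus: "bop S \<Longrightarrow> bop T \<Longrightarrow> bop (\<lambda>x. S x - T x)"
  unfolding bop_def by (auto intro: bounded_linear_sub simp: scaleC_diff_right)
lemma bop_smultC: "bop T \<Longrightarrow> bop (\<lambda>x. scaleC c (T x))"
proof -
  assume T: "bop T"
  have bl: "bounded_linear (\<lambda>x::'a. scaleC c x)"
  proof (rule bounded_linear_intro[where K="cmod c"])
    show "scaleC c (x + y) = scaleC c x + scaleC c y" for x y :: 'a by (rule scaleC_add_right)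
    show "scaleC c (scaleR r x) = scaleR r (scaleC c x)" for r :: real and x :: 'a
      by (simp add: scaleR_scaleC scaleC_scaleC mult.commute)
    show "norm (scaleC c x) \<le> norm x * cmod c" for x :: 'a
    proof -
      have h: "(complex_of_real (cmod c))\<^sup>2 * (complex_of_real (norm x))\<^sup>2 =
      (complex_of_real (norm (scaleC c x)))\<^sup>2"
        using cinner_self_norm[of "scaleC c x"] cinner_self_norm[of x]
        by (simp add: cinner_scaleC_left cinner_scaleC_right power_mult_distrib
             mult.assoc[symmetric] complex_norm_square[symmetric] flip: of_real_mult)
      have "(norm (scaleC c x))\<^sup>2 = (cmod c * norm x)\<^sup>2"
        by (metis h of_real_eq_iff of_real_mult of_real_power power_mult_distrib)
      then show ?thesis by (simp add: mult.commute power2_eq_iff_nonneg)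
    qed
  qed
  show ?thesis using T unfolding bop_def
    by (auto intro: bounded_linear_compose[OF bl] simp: scaleC_scaleC mult.commute)
qed
lemma bop_smultR: "bop T \<Longrightarrow> bop (\<lambda>x. scaleR r (T x))"
  using bop_smultC[of T "complex_of_real r"] by (simp add: scaleR_scaleC)
lemma bop_comp: "bop S \<Longrightarrow> bop T \<Longrightarrow> bop (S \<circ> T)"
  unfolding bop_def by (auto simp: comp_def intro: bounded_linear_compose)


lemma positive_op_iff: "positive_op T \<longleftrightarrow> bop T \<and> (\<forall>x. Im (cinner x (T x)) = 0 \<and> 0 \<le> Re (cinner x (T x)))"
  unfolding positive_op_def less_eq_complex_def by auto

lemma positive_real: "positive_op T \<Longrightarrow> cinner x (T x) = complex_of_real (Re (cinner x (T x)))"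
  unfolding positive_op_iff by (simp add: complex_eq_iff)

lemma positive_cnj: "positive_op T \<Longrightarrow> cinner (T x) x = cinner x (T x)"
  by (metis cinner_cnj_commute positive_real complex_cnj_complex_of_real)

lemma positive_selfadj:
  assumes P: "positive_op T"
  shows "cinner x (T y) = cinner (T x) y"
proof -
  have T: "bop T" using P by (simp add: positive_op_def)
  define a where "a = cinner x (T x)"
  define b where "b = cinner x (T y)"
  define c where "c = cinner y (T x)"
  define e where "e = cinner y (T y)"
  have cb: "cinner (T y) x = cnj b" unfolding b_def by (metis cinner_cnj_commute)
  have cc: "cinner (T x) y = cnj c" unfolding c_def by (metis cinner_cnj_commute)
  have 1: "cinner (T (x + y)) (x + y) = cinner (x + y) (T (x + y))" by (rule positive_cnj[OF P])
  have 2: "cinner (T (x + scaleC \<i> y)) (x + scaleC \<i> y) = cinner (x + scaleC \<i> y) (T (x + scaleC \<i> y))"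
    by (rule positive_cnj[OF P])
  have ea: "cinner (T x) x = a" "cinner (T y) y = e" unfolding a_def e_def by (simp_all add: positive_cnj[OF P])
  from 1 have h1: "a + cnj b + cnj c + e = a + b + c + e"
    by (simp add: bop_add[OF T] cinner_add_left cinner_add_right ea cb cc
          flip: a_def b_def c_def e_def)
  from 2 have h2: "a + \<i> * cnj c - \<i> * cnj b + e = a + \<i> * b - \<i> * c + e"
    by (simp add: bop_add[OF T] bop_scaleC[OF T] cinner_add_left cinner_add_right
          cinner_scaleC_left cinner_scaleC_right ea cb cc algebra_simps
          flip: a_def b_def c_def e_def)
  from h1 h2 have "b = cnj c"
    by (auto simp: complex_eq_iff)
  then show ?thesis by (simp add: cc b_def)
qed


lemma quad_nonneg_imp:
  fixes a b S :: real
  assumes "0 \<le> a" "0 \<le> b" "0 \<le> S" "\<And>t. 0 \<le> a - 2 * t * S + t\<^sup>2 * S * b"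
  shows "S \<le> a * b"
proof (cases "b = 0")
  case True
  show ?thesis
  proof (rule ccontr)
    assume "\<not> S \<le> a * b"
    then have "S > 0" using True by simp
    have "0 \<le> a - 2 * ((a+1)/(2*S)) * S + ((a+1)/(2*S))\<^sup>2 * S * b" by (rule assms(4))
    then show False using True \<open>S > 0\<close> by (simp add: field_simps)
  qed
next
  case False
  then have bp: "b > 0" using assms(2) by simp
  have "0 \<le> a - 2 * (1/b) * S + (1/b)\<^sup>2 * S * b" by (rule assms(4))
  then have "0 \<le> a - S / b" using bp by (simp add: field_simps power2_eq_square)
  then show ?thesis using bp by (simp add: field_simps)
qed

lemma cauchy_schwarz_pos:
  assumes P: "positive_op T"
  shows "(cmod (cinner x (T y)))\<^sup>2 \<le> Re (cinner x (T x)) * Re (cinner y (T y))"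
proof -
  have T: "bop T" using P by (simp add: positive_op_def)
  define s where "s = cinner x (T y)"
  define S where "S = (cmod s)\<^sup>2"
  define a where "a = Re (cinner x (T x))"
  define b where "b = Re (cinner y (T y))"
  have a0: "0 \<le> a" "0 \<le> b" using P unfolding positive_op_iff a_def b_def by auto
  have ys: "cinner y (T x) = cnj s"
    unfolding s_def by (metis positive_selfadj[OF P] cinner_cnj_commute)
  have "0 \<le> a - 2 * t * S + t\<^sup>2 * S * b" for t
  proof -
    define \<mu> where "\<mu> = - complex_of_real t * cnj s"
    define w where "w = x + scaleC \<mu> y"
    have ss: "s * cnj s = complex_of_real S" unfolding S_def by (simp only: complex_norm_square)
    have m1: "\<mu> * s = - complex_of_real (t * S)"
      unfolding \<mu>_def by (simp add: mult.assoc mult.commute[of "cnj s"] ss)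
    have m2: "cnj \<mu> * cnj s = - complex_of_real (t * S)"
      using arg_cong[OF m1, of cnj] by simp
    have m3: "cnj \<mu> * \<mu> = complex_of_real (t\<^sup>2 * S)"
      unfolding \<mu>_def using ss by (simp add: power2_eq_square algebra_simps)
    have "cinner w (T w) = cinner x (T x) + \<mu> * s + cnj \<mu> * cnj s + (cnj \<mu> * \<mu>) * cinner y (T y)"
      unfolding w_def
      by (simp add: bop_add[OF T] bop_scaleC[OF T] cinner_add_left cinner_add_right
          cinner_scaleC_left cinner_scaleC_right ys algebra_simps flip: s_def)
    also have "\<dots> = complex_of_real (a - 2 * t * S + t\<^sup>2 * S * b)"
      unfolding m1 m2 m3 a_def b_def
      by (subst positive_real[OF P, of x], subst positive_real[OF P, of y]) simp
    finally have "Re (cinner w (T w)) = a - 2 * t * S + t\<^sup>2 * S * b" by simp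
    then show ?thesis using P unfolding positive_op_iff by metis
  qed
  then have "S \<le> a * b" using a0 quad_nonneg_imp[of a b S] unfolding S_def by auto
  then show ?thesis unfolding S_def s_def a_def b_def .
qed


lemma positive_id: "positive_op (\<lambda>x::'a::chilbert_space. x)"
  unfolding positive_op_def by (simp add: bop_id' cinner_ge_zero)

lemma norm_sq_Re: "(norm x)\<^sup>2 = Re (cinner (x::'a::complex_inner) x)"
  by (simp add: cinner_self_norm)

lemma cinner_cs: "cmod (cinner (x::'a::chilbert_space) y) \<le> norm x * norm y"
proof -
  have "(cmod (cinner x y))\<^sup>2 \<le> (norm x)\<^sup>2 * (norm y)\<^sup>2"
    using cauchy_schwarz_pos[OF positive_id, of x y] by (simp add: norm_sq_Re)
  then have "(cmod (cinner x y))\<^sup>2 \<le> (norm x * norm y)\<^sup>2" by (simp add: power_mult_distrib)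
  then show ?thesis by (rule power2_le_imp_le) simp
qed

lemma Re_cinner_le: "Re (cinner (x::'a::chilbert_space) y) \<le> norm x * norm y"
  using cinner_cs[of x y] complex_Re_le_cmod order_trans by blast

lemma bop_bound: "bop T \<Longrightarrow> \<exists>K>0. \<forall>x. norm (T x) \<le> norm x * K"
  unfolding bop_def using bounded_linear.pos_bounded by blast

lemma invertible_inv:
  assumes "invertible_op A"
  shows "bop (inv A) \<and> A \<circ> inv A = id \<and> inv A \<circ> A = id"
proof -
  obtain S where S: "bop S" "A \<circ> S = id" "S \<circ> A = id" using assms unfolding invertible_op_def by blast
  have "inv A = S" using S by (simp add: inv_unique_comp)
  then show ?thesis using S by simp
qed

lemma pos_inv_lower:
  assumes P: "positive_op A" and I: "invertible_op A"
  shows "\<exists>\<epsilon>>0. \<forall>x. \<epsilon> * (norm x)\<^sup>2 \<le> Re (cinner x (A x))"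
proof -
  define S where "S = inv A"
  have S: "bop S" "\<And>x. A (S x) = x" "\<And>x. S (A x) = x"
    using invertible_inv[OF I] unfolding S_def by (auto simp: fun_eq_iff)
  obtain K where K: "K > 0" "\<And>x. norm (S x) \<le> norm x * K" using bop_bound[OF S(1)] by blast
  have "(1/K) * (norm x)\<^sup>2 \<le> Re (cinner x (A x))" for x
  proof (cases "x = 0")
    case True then show ?thesis using P by (simp add: positive_op_iff)
  next
    case False
    have q0: "0 \<le> Re (cinner x (A x))" using P by (simp add: positive_op_iff)
    have cs: "(cmod (cinner x (A (S x))))\<^sup>2 \<le> Re (cinner x (A x)) * Re (cinner (S x) (A (S x)))"
      by (rule cauchy_schwarz_pos[OF P])
    have r: "Re (cinner (S x) (A (S x))) \<le> norm x * K * norm x"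
      using Re_cinner_le[of "S x" x] K(2)[of x] S(2)[of x]
      by (metis mult_right_mono norm_ge_zero order_trans)
    have "Re (cinner x (A x)) * Re (cinner (S x) (A (S x))) \<le> Re (cinner x (A x)) * (norm x * K * norm x)"
      using mult_left_mono[OF r q0] .
    from order_trans[OF cs this]
    have "(norm x)\<^sup>2 * (norm x)\<^sup>2 \<le> Re (cinner x (A x)) * K * (norm x)\<^sup>2"
      by (simp add: S(2) cinner_self_norm power2_eq_square mult_ac del: of_real_mult flip: of_real_mult)
    then have "(norm x)\<^sup>2 \<le> Re (cinner x (A x)) * K" by (rule mult_right_le_imp_le) (use False in simp)
    then show ?thesis using K(1) by (simp add: field_simps)
  qed
  then show ?thesis using K(1) by (intro exI[of _ "1/K"]) auto
qed


lemma bounded_below_inverse: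
  fixes P :: "'a::chilbert_space \<Rightarrow> 'a"
  assumes Pp: "positive_op P" and e: "\<epsilon> > 0" and lb: "\<And>x. \<epsilon> * (norm x)\<^sup>2 \<le> Re (cinner x (P x))"
  shows "positive_op (inv P) \<and> (\<forall>z. P (inv P z) = z) \<and> (\<forall>x. inv P (P x) = x)"
proof -
  have Pb: "bop P" using Pp by (simp add: positive_op_def)
  obtain K where K: "K > 0" "\<And>x. norm (P x) \<le> norm x * K" using bop_bound[OF Pb] by blast
  have up: "Re (cinner x (P x)) \<le> K * (norm x)\<^sup>2" for x
  proof -
    have "norm x * norm (P x) \<le> norm x * (norm x * K)" by (rule mult_left_mono[OF K(2)]) simp
    then show ?thesis using Re_cinner_le[of x "P x"] by (simp add: power2_eq_square mult_ac)
  qed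
  define t where "t = 1 / (K + \<epsilon> + 1)"
  have t0: "t > 0" "t * K \<le> 1" "t * \<epsilon> < 1" using K(1) e unfolding t_def by (auto simp: field_simps)
  define c where "c = 1 - t * \<epsilon>"
  have c0: "0 \<le> c" "c < 1" using t0 e unfolding c_def by (auto simp: mult_pos_pos)
  define T where "T = (\<lambda>y. y - scaleR t (P y))"
  have Tb: "bop T" unfolding T_def by (intro bop_minus bop_id' bop_smultR Pb)
  have Tq: "cinner y (T y) = complex_of_real ((norm y)\<^sup>2 - t * Re (cinner y (P y)))" for y
    unfolding T_def using positive_real[OF Pp, of y]
    by (simp add: cinner_diff_right cinner_scaleR_right cinner_self_norm)
  have Tpos: "positive_op T"
    unfolding positive_op_iff
  proof (intro conjI allI Tb)
    fix y
    show "Im (cinner y (T y)) = 0" by (simp add: Tq)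
    have "t * Re (cinner y (P y)) \<le> t * (K * (norm y)\<^sup>2)" using up t0(1) by (simp add: mult_left_mono)
    also have "\<dots> \<le> (norm y)\<^sup>2" using mult_right_mono[OF t0(2), of "(norm y)\<^sup>2"] by (simp add: mult.assoc)
    finally show "0 \<le> Re (cinner y (T y))" by (simp add: Tq)
  qed
  have Tup: "Re (cinner y (T y)) \<le> c * (norm y)\<^sup>2" for y
    using lb[of y] t0(1) unfolding Tq c_def by (simp add: algebra_simps mult_left_mono)
  have Tn: "norm (T y) \<le> c * norm y" for y
  proof (cases "T y = 0")
    case True then show ?thesis using c0 by simp
  next
    case False
    have "(norm (T y))\<^sup>2 = Re (cinner y (T (T y)))"
      by (simp add: norm_sq_Re positive_selfadj[OF Tpos])
    also have "\<dots> \<le> cmod (cinner y (T (T y)))" by (rule complex_Re_le_cmod)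
    finally have a: "(norm (T y))\<^sup>2 \<le> cmod (cinner y (T (T y)))" .
    have "(cmod (cinner y (T (T y))))\<^sup>2 \<le> Re (cinner y (T y)) * Re (cinner (T y) (T (T y)))"
      by (rule cauchy_schwarz_pos[OF Tpos])
    also have "\<dots> \<le> (c * (norm y)\<^sup>2) * (c * (norm (T y))\<^sup>2)"
      using Tup[of y] Tup[of "T y"] Tpos c0 unfolding positive_op_iff
      by (intro mult_mono) auto
    finally have b: "(cmod (cinner y (T (T y))))\<^sup>2 \<le> (c * norm y * norm (T y))\<^sup>2"
      by (simp add: power_mult_distrib power2_eq_square mult_ac)
    have "cmod (cinner y (T (T y))) \<le> c * norm y * norm (T y)"
      by (rule power2_le_imp_le[OF b]) (use c0 in simp)
    with a have "(norm (T y))\<^sup>2 \<le> c * norm y * norm (T y)" by linarith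
    then have "norm (T y) * norm (T y) \<le> (c * norm y) * norm (T y)"
      by (simp only: power2_eq_square)
    then show ?thesis by (rule mult_right_le_imp_le) (use False in simp)
  qed
  have surj: "\<exists>y. P y = z" for z
  proof -
    define f where "f = (\<lambda>y. T y + scaleR t z)"
    have "\<forall>x y. dist (f x) (f y) \<le> c * dist x y"
    proof (intro allI)
      fix x y
      have "f x - f y = T (x - y)" unfolding f_def by (simp add: bop_diff[OF Tb])
      then show "dist (f x) (f y) \<le> c * dist x y" using Tn[of "x - y"] by (simp add: dist_norm)
    qed
    then obtain y where "f y = y" using banach_fix_type[OF c0] by blast
    then have "scaleR t (z - P y) = 0" unfolding f_def T_def by (simp add: algebra_simps)
    then show ?thesis using t0(1) by auto
  qed
  have inj: "inj P"
  proof (rule injI)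
    fix x y assume "P x = P y"
    then have "P (x - y) = 0" by (simp add: bop_diff[OF Pb])
    then have "\<epsilon> * (norm (x - y))\<^sup>2 \<le> 0" using lb[of "x - y"] by simp
    then show "x = y" using e by (simp add: mult_le_0_iff)
  qed
  have PR: "P (inv P z) = z" for z using surj by (metis f_inv_into_f rangeI)
  have RP: "inv P (P x) = x" for x using inj by simp
  define R where "R = inv P"
  have Radd: "R (a + b) = R a + R b" for a b
    using inj unfolding R_def by (rule injD) (simp add: PR bop_add[OF Pb])
  have RC: "R (scaleC c' a) = scaleC c' (R a)" for c' a
    using inj unfolding R_def by (rule injD) (simp add: PR bop_scaleC[OF Pb])
  have RR: "R (scaleR r a) = scaleR r (R a)" for r a
    using RC[of "complex_of_real r" a] by (simp add: scaleR_scaleC)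
  have Rn: "norm (R z) \<le> norm z * (1/\<epsilon>)" for z
  proof -
    have "\<epsilon> * (norm (R z))\<^sup>2 \<le> norm (R z) * norm z"
      using lb[of "R z"] Re_cinner_le[of "R z" z] unfolding R_def PR by linarith
    then have "\<epsilon> * norm (R z) \<le> norm z" if "R z \<noteq> 0"
      using that by (simp add: power2_eq_square mult_ac)
    then show ?thesis using e by (cases "R z = 0") (auto simp: field_simps)
  qed
  have Rb: "bop R" unfolding bop_def
    using bounded_linear_intro[of R, OF Radd RR Rn] RC by blast
  have Rpos: "positive_op R"
    unfolding positive_op_def
  proof (intro conjI allI Rb)
    fix z
    have "cinner z (R z) = cinner (P (R z)) (R z)" unfolding R_def PR ..
    also have "\<dots> = cinner (R z) (P (R z))" by (rule positive_cnj[OF Pp])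
    finally show "0 \<le> cinner z (R z)" using Pp unfolding positive_op_def by simp
  qed
  show ?thesis using Rpos PR RP unfolding R_def by blast
qed


lemma positive_plus: "positive_op S \<Longrightarrow> positive_op T \<Longrightarrow> positive_op (\<lambda>x. S x + T x)"
  unfolding positive_op_iff by (auto intro: bop_plus simp: cinner_add_right)

lemma positive_smult: "positive_op T \<Longrightarrow> 0 \<le> r \<Longrightarrow> positive_op (\<lambda>x. scaleR r (T x))"
  unfolding positive_op_iff by (auto intro: bop_smultR simp: cinner_scaleR_right)

lemma upl_bop: "unital_positive_linear_map \<Phi> \<Longrightarrow> bop T \<Longrightarrow> bop (\<Phi> T)"
  unfolding unital_positive_linear_map_def by blast
lemma upl_pos: "unital_positive_linear_map \<Phi> \<Longrightarrow> positive_op T \<Longrightarrow> positive_op (\<Phi> T)"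
  unfolding unital_positive_linear_map_def by blast
lemma upl_id: "unital_positive_linear_map \<Phi> \<Longrightarrow> \<Phi> id = id"
  unfolding unital_positive_linear_map_def by blast
lemma upl_add: "unital_positive_linear_map \<Phi> \<Longrightarrow> bop S \<Longrightarrow> bop T \<Longrightarrow>
    \<Phi> (\<lambda>x. S x + T x) = (\<lambda>y. \<Phi> S y + \<Phi> T y)"
  unfolding unital_positive_linear_map_def by blast
lemma upl_scaleR: "unital_positive_linear_map \<Phi> \<Longrightarrow> bop T \<Longrightarrow>
    \<Phi> (\<lambda>x. scaleR r (T x)) = (\<lambda>y. scaleR r (\<Phi> T y))"
  unfolding unital_positive_linear_map_def scaleR_scaleC by blast

lemma upl_lin2:
  assumes "unital_positive_linear_map \<Phi>" "bop S" "bop T"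
  shows "\<Phi> (\<lambda>x. scaleR a (S x) + scaleR b (T x)) = (\<lambda>y. scaleR a (\<Phi> S y) + scaleR b (\<Phi> T y))"
proof -
  have "\<Phi> (\<lambda>x. scaleR a (S x) + scaleR b (T x)) = (\<lambda>y. \<Phi> (\<lambda>x. scaleR a (S x)) y + \<Phi> (\<lambda>x. scaleR b (T x)) y)"
    using upl_add[OF assms(1) bop_smultR[OF assms(2)] bop_smultR[OF assms(3)]] by simp
  then show ?thesis using upl_scaleR[OF assms(1) assms(2)] upl_scaleR[OF assms(1) assms(3)] by simp
qed

lemma upl_lin3:
  assumes "unital_positive_linear_map \<Phi>" "bop S" "bop T" "bop U"
  shows "\<Phi> (\<lambda>x. scaleR a (S x) + scaleR b (T x) + scaleR c (U x)) =
    (\<lambda>y. scaleR a (\<Phi> S y) + scaleR b (\<Phi> T y) + scaleR c (\<Phi> U y))"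
proof -
  let ?V = "\<lambda>x. scaleR a (S x) + scaleR b (T x)"
  have V: "bop ?V" by (intro bop_plus bop_smultR assms)
  have "\<Phi> (\<lambda>x. scaleR a (S x) + scaleR b (T x) + scaleR c (U x)) = \<Phi> (\<lambda>x. scaleR 1 (?V x) + scaleR c (U x))"
    by simp
  also have "\<dots> = (\<lambda>y. scaleR 1 (\<Phi> ?V y) + scaleR c (\<Phi> U y))" by (rule upl_lin2[OF assms(1) V assms(4)])
  also have "\<dots> = (\<lambda>y. scaleR a (\<Phi> S y) + scaleR b (\<Phi> T y) + scaleR c (\<Phi> U y))"
    using upl_lin2[OF assms(1-3), of a b] by simp
  finally show ?thesis .
qed


theorem mainTheorem3:
  fixes \<Phi> :: "('h::chilbert_space \<Rightarrow> 'h) \<Rightarrow> ('k::chilbert_space \<Rightarrow> 'k)"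
    and A B :: "'h \<Rightarrow> 'h"
    and m M :: real
  assumes "unital_positive_linear_map \<Phi>"
    and "bop A" and "bop B"
    and "positive_op A" and "invertible_op A"
    and "0 < m" and "m < M"
    and "loewner_le (\<lambda>x. scaleR m (A x)) B"
    and "loewner_le B (\<lambda>x. scaleR M (A x))"
  shows "loewner_le (\<Phi> (B \<circ> inv A \<circ> B))
           (\<lambda>y. scaleR (((M + m) / (2 * sqrt (M * m)))\<^sup>2) ((\<Phi> B \<circ> inv (\<Phi> A) \<circ> \<Phi> B) y))"
proof -
  note U = assms(1) and Ab = assms(2) and Bb = assms(3) and Ap = assms(4)
  define S where "S = inv A"
  have Sb: "bop S" and AS: "\<And>x. A (S x) = x" and SA: "\<And>x. S (A x) = x"
    using invertible_inv[OF assms(5)] unfolding S_def by (auto simp: fun_eq_iff)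
  define Y where "Y = (\<lambda>x. B x - scaleR m (A x))"
  have Yp: "positive_op Y" using assms(8) unfolding loewner_le_def Y_def .
  have Xp: "positive_op (\<lambda>x. scaleR M (A x) - B x)" using assms(9) unfolding loewner_le_def .
  have Sp: "positive_op S"
    unfolding positive_op_def
  proof (intro conjI allI Sb)
    fix z
    have "cinner z (S z) = cinner (A (S z)) (S z)" by (simp add: AS)
    also have "\<dots> = cinner (S z) (A (S z))" by (rule positive_cnj[OF Ap])
    finally show "0 \<le> cinner z (S z)" using Ap unfolding positive_op_def by simp
  qed
  have Yb: "bop Y" using Yp by (simp add: positive_op_def)
  define D where "D = (\<lambda>x. scaleR (M+m) (B x) + scaleR (-(M*m)) (A x) + scaleR (-1) ((B \<circ> S \<circ> B) x))"
  have BSBb: "bop (B \<circ> S \<circ> B)" by (intro bop_comp Bb Sb)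
  have Db: "bop D" unfolding D_def by (intro bop_plus bop_smultR Ab Bb BSBb)
  have Deq: "D x = scaleR (M - m) (Y x) - Y (S (Y x))" for x
    unfolding D_def Y_def
    by (simp add: bop_diff[OF Bb] bop_diff[OF Sb] bop_diff[OF Ab] bop_scaleR[OF Bb] bop_scaleR[OF Sb]
        bop_scaleR[OF Ab] SA AS algebra_simps)
  have Dp: "positive_op D"
    unfolding positive_op_iff
  proof (intro conjI allI Db)
    fix x
    define u where "u = Y x"
    define v where "v = S u"
    define \<alpha> where "\<alpha> = Re (cinner x (Y x))"
    define \<tau> where "\<tau> = Re (cinner u (S u))"
    have \<alpha>0: "0 \<le> \<alpha>" and Ya: "Im (cinner x (Y x)) = 0" using Yp unfolding positive_op_iff \<alpha>_def by auto
    have \<tau>0: "0 \<le> \<tau>" and St: "Im (cinner u (S u)) = 0" using Sp unfolding positive_op_iff \<tau>_def by auto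
    have uSu: "cinner u (S u) = complex_of_real \<tau>" using positive_real[OF Sp, of u] unfolding \<tau>_def .
    have xYv: "cinner x (Y v) = complex_of_real \<tau>"
      using positive_selfadj[OF Yp, of x v] uSu unfolding u_def v_def by simp
    have vAv: "Re (cinner v (A v)) = \<tau>"
      unfolding v_def AS using uSu cinner_cnj_commute[of "S u" u] by simp
    have vYv: "Re (cinner v (Y v)) \<le> (M - m) * Re (cinner v (A v))"
      using Xp unfolding positive_op_iff Y_def
      by (auto simp: cinner_diff_right cinner_scaleR_right algebra_simps dest: spec[of _ v])
    have "\<tau>\<^sup>2 \<le> \<alpha> * Re (cinner v (Y v))"
      using cauchy_schwarz_pos[OF Yp, of x v] unfolding xYv \<alpha>_def by simp
    also have "\<dots> \<le> \<alpha> * ((M - m) * \<tau>)" using vYv vAv \<alpha>0 by (simp add: mult_left_mono)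
    finally have "\<tau> * \<tau> \<le> ((M - m) * \<alpha>) * \<tau>" by (simp add: power2_eq_square mult_ac)
    then have t: "\<tau> \<le> (M - m) * \<alpha>"
      using \<tau>0 \<alpha>0 assms(7) by (cases "\<tau> = 0") (auto intro: mult_right_le_imp_le)
    have "cinner x (D x) = complex_of_real ((M - m) * \<alpha>) - complex_of_real \<tau>"
      unfolding Deq cinner_diff_right cinner_scaleR_right
      using positive_real[OF Yp, of x] xYv unfolding u_def v_def \<alpha>_def by simp
    then show "Im (cinner x (D x)) = 0" "0 \<le> Re (cinner x (D x))" using t by simp_all
  qed
  have PhiD: "\<Phi> D = (\<lambda>y. scaleR (M+m) (\<Phi> B y) + scaleR (-(M*m)) (\<Phi> A y) + scaleR (-1) (\<Phi> (B \<circ> S \<circ> B) y))"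
    unfolding D_def by (rule upl_lin3[OF U Bb Ab BSBb])
  have PDp: "positive_op (\<Phi> D)" by (rule upl_pos[OF U Dp])
  define Q where "Q = \<Phi> B"
  define P where "P = \<Phi> A"
  have Bp: "positive_op B"
  proof -
    have "positive_op (\<lambda>x. Y x + scaleR m (A x))" by (intro positive_plus positive_smult Yp Ap) (use assms(6) in simp)
    moreover have "(\<lambda>x. Y x + scaleR m (A x)) = B" unfolding Y_def by simp
    ultimately show ?thesis by simp
  qed
  have Qp: "positive_op Q" unfolding Q_def by (rule upl_pos[OF U Bp])
  have Pp: "positive_op P" unfolding P_def by (rule upl_pos[OF U Ap])
  have Qb: "bop Q" and Pb: "bop P" using Qp Pp by (simp_all add: positive_op_def)
  obtain \<epsilon> where e: "\<epsilon> > 0" and elb: "\<And>x. \<epsilon> * (norm x)\<^sup>2 \<le> Re (cinner x (A x))"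
    using pos_inv_lower[OF Ap assms(5)] by blast
  have Ae: "positive_op (\<lambda>x. scaleR 1 (A x) + scaleR (-\<epsilon>) (id x))"
    unfolding positive_op_iff
  proof (intro conjI allI bop_plus bop_smultR Ab bop_id)
    fix x
    show "Im (cinner x (scaleR 1 (A x) + scaleR (-\<epsilon>) (id x))) = 0"
      using Ap unfolding positive_op_iff by (simp add: cinner_add_right cinner_diff_right cinner_scaleR_right cinner_self_norm)
    show "0 \<le> Re (cinner x (scaleR 1 (A x) + scaleR (-\<epsilon>) (id x)))"
      using elb[of x] by (simp add: cinner_add_right cinner_diff_right cinner_scaleR_right cinner_self_norm)
  qed
  have "positive_op (\<lambda>y. scaleR 1 (P y) + scaleR (-\<epsilon>) (id y))"
    using upl_pos[OF U Ae] unfolding upl_lin2[OF U Ab bop_id] upl_id[OF U] P_def .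
  then have Plb: "\<epsilon> * (norm y)\<^sup>2 \<le> Re (cinner y (P y))" for y
    unfolding positive_op_iff by (auto simp: cinner_add_right cinner_diff_right cinner_scaleR_right cinner_self_norm dest: spec[of _ y])
  define R where "R = inv P"
  have Rp: "positive_op R" and PR: "\<And>z. P (R z) = z" and RP: "\<And>x. R (P x) = x"
    using bounded_below_inverse[OF Pp e Plb] unfolding R_def by auto
  have Rb: "bop R" using Rp by (simp add: positive_op_def)
  define c where "c = (M + m) / 2"
  define k where "k = c\<^sup>2 / (M * m)"
  have Mm: "M * m > 0" using assms(6,7) by simp
  define Z where "Z = (\<lambda>y. scaleR c (Q y) - scaleR (M * m) (P y))"
  have Zb: "bop Z" unfolding Z_def by (intro bop_minus bop_smultR Qb Pb)
  have Zsa: "cinner y (Z w) = cinner (Z y) w" for y w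
    unfolding Z_def
    by (simp add: cinner_diff_right cinner_diff_left cinner_scaleR_right cinner_scaleR_left
        positive_selfadj[OF Qp] positive_selfadj[OF Pp])
  define E where "E = (\<lambda>y. scaleR k ((Q \<circ> R \<circ> Q) y) + scaleR (-(M+m)) (Q y) + scaleR (M*m) (P y))"
  have Eb: "bop E" unfolding E_def by (intro bop_plus bop_smultR bop_comp Qb Pb Rb)
  have Eeq: "E y = scaleR (1 / (M * m)) (Z (R (Z y)))" for y
    unfolding E_def Z_def k_def
    using Mm assms(6,7)
    apply (simp add: bop_diff[OF Qb] bop_diff[OF Pb] bop_diff[OF Rb] bop_scaleR[OF Qb] bop_scaleR[OF Pb]
        bop_scaleR[OF Rb] PR RP c_def algebra_simps power2_eq_square scaleR_diff_right divide_simps)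
    apply (simp flip: scaleR_add_left)
    done
  have Ep: "positive_op E"
    unfolding positive_op_iff
  proof (intro conjI allI Eb)
    fix y
    have "cinner y (E y) = complex_of_real (1 / (M * m)) * cinner (Z y) (R (Z y))"
      unfolding Eeq cinner_scaleR_right Zsa ..
    then show "Im (cinner y (E y)) = 0" "0 \<le> Re (cinner y (E y))"
      using Rp Mm unfolding positive_op_iff by (auto dest: spec[of _ "Z y"])
  qed
  have kk: "((M + m) / (2 * sqrt (M * m)))\<^sup>2 = k"
    unfolding k_def c_def using Mm by (simp add: power_divide power_mult_distrib)
  have fin: "(\<lambda>y. scaleR (((M + m) / (2 * sqrt (M * m)))\<^sup>2) ((\<Phi> B \<circ> inv (\<Phi> A) \<circ> \<Phi> B) y) - \<Phi> (B \<circ> inv A \<circ> B) y)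
      = (\<lambda>y. E y + \<Phi> D y)"
    unfolding kk E_def PhiD Q_def P_def R_def S_def by (simp add: fun_eq_iff algebra_simps)
  show ?thesis unfolding loewner_le_def fin by (rule positive_plus[OF Ep PDp])
qed
end
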